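(* Let $\mathcal{N}$ be a finite-dimensional 2-step nilpotent Lie algebra over $\mathbb{R}$. Let $\mathcal{Z}$ be either $[\mathcal{N},\mathcal{N}]$ or the center $\mathfrak{z}(\mathcal{N})$, and let $\mathcal{V}$ be a subspace with $\mathcal{N}=\mathcal{V}\oplus\mathcal{Z}$. Let $G$ be the group of Lie ring automorphisms of $\mathcal{N}$, $H=\{f\in G: f(x)-x\in\mathcal{Z}\text{ for all }x\in\mathcal{N}\}$ and $K=\{f\in G: f(\mathcal{V})=\mathcal{V}\}$. Then $H$ is a normal subgroup of $G$, $K$ is a subgroup of $G$, and $G=HK$. If $\mathcal{Z}=[\mathcal{N},\mathcal{N}]$, then moreover $H\cap K=\{\mathrm{id}\}$, so $G\cong H\rtimes K$.
   Context: A Lie ring automorphism of a real Lie algebra is a bijective additive map preserving the Lie bracket (not necessarily $\mathbb{R}$-linear). *)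

theory Defs
  imports "HOL-Analysis.Analysis" "HOL-Algebra.Coset"
begin

text \<open>A real Lie algebra structure on a finite-dimensional real vector space
  (the carrier type is a euclidean_space, hence finite-dimensional), given by a bracket.\<close>
definition lie_algebra :: "('a::real_vector \<Rightarrow> 'a \<Rightarrow> 'a) \<Rightarrow> bool" where
  "lie_algebra br \<longleftrightarrow> bilinear br \<and> (\<forall>x. br x x = 0) \<and>
     (\<forall>x y z. br x (br y z) + br y (br z x) + br z (br x y) = 0)"

definition two_step_nilpotent :: "('a::real_vector \<Rightarrow> 'a \<Rightarrow> 'a) \<Rightarrow> bool" where
  "two_step_nilpotent br \<longleftrightarrow> (\<forall>x y z. br (br x y) z = 0) \<and> (\<exists>x y. br x y \<noteq> 0)"

definition derived_alg :: "('a::real_vector \<Rightarrow> 'a \<Rightarrow> 'a) \<Rightarrow> 'a set" where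
  "derived_alg br = span {br x y | x y. True}"

definition lie_center :: "('a::real_vector \<Rightarrow> 'a \<Rightarrow> 'a) \<Rightarrow> 'a set" where
  "lie_center br = {z. \<forall>x. br z x = 0}"

text \<open>Lie ring automorphism: bijective additive map preserving the bracket
  (not necessarily R-linear).\<close>
definition lie_ring_aut :: "('a::real_vector \<Rightarrow> 'a \<Rightarrow> 'a) \<Rightarrow> ('a \<Rightarrow> 'a) \<Rightarrow> bool" where
  "lie_ring_aut br f \<longleftrightarrow> bij f \<and> (\<forall>x y. f (x + y) = f x + f y) \<and>
     (\<forall>x y. f (br x y) = br (f x) (f y))"

definition aut_group :: "('a::real_vector \<Rightarrow> 'a \<Rightarrow> 'a) \<Rightarrow> ('a \<Rightarrow> 'a) monoid" where
  "aut_group br = \<lparr>carrier = {f. lie_ring_aut br f}, mult = (\<lambda>f g. f \<circ> g), one = id\<rparr>"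

end

theory Submission
  imports Defs
begin

lemma aut_additive: "lie_ring_aut br f \<Longrightarrow> Modules.additive f"
  unfolding lie_ring_aut_def by (simp add: Modules.additive_def)

lemma aut_zero: "lie_ring_aut br f \<Longrightarrow> f 0 = 0"
  using aut_additive Modules.additive.zero by blast

lemma aut_diff: "lie_ring_aut br f \<Longrightarrow> f (x - y) = f x - f y"
  using aut_additive Modules.additive.diff by blast

lemma aut_minus: "lie_ring_aut br f \<Longrightarrow> f (- x) = - f x"
  using aut_additive Modules.additive.minus by blast

lemma aut_add: "lie_ring_aut br f \<Longrightarrow> f (x + y) = f x + f y"
  unfolding lie_ring_aut_def by blast

lemma aut_br: "lie_ring_aut br f \<Longrightarrow> f (br x y) = br (f x) (f y)"
  unfolding lie_ring_aut_def by blast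

lemma aut_bij: "lie_ring_aut br f \<Longrightarrow> bij f"
  unfolding lie_ring_aut_def by blast

lemma aut_inv: assumes "lie_ring_aut br f" shows "lie_ring_aut br (inv_into UNIV f)"
proof -
  have b: "bij f" using assms aut_bij by blast
  have fi: "\<And>x. f (inv_into UNIV f x) = x" using b by (meson bij_inv_eq_iff)
  have if1: "\<And>x. inv_into UNIV f (f x) = x" using b by (simp add: bij_is_inj)
  have "inv_into UNIV f (x + y) = inv_into UNIV f x + inv_into UNIV f y" for x y
    by (metis fi if1 aut_add[OF assms])
  moreover have "inv_into UNIV f (br x y) = br (inv_into UNIV f x) (inv_into UNIV f y)" for x y
    by (metis fi if1 aut_br[OF assms])
  ultimately show ?thesis unfolding lie_ring_aut_def using bij_imp_bij_inv[OF b] by blast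
qed

lemma aut_comp: assumes "lie_ring_aut br f" "lie_ring_aut br g" shows "lie_ring_aut br (f \<circ> g)"
  using assms unfolding lie_ring_aut_def by (auto intro: bij_comp)

lemma aut_id: "lie_ring_aut br id"
  unfolding lie_ring_aut_def by auto

lemma aut_group_is_group: "group (aut_group br)"
proof (rule groupI)
  fix x assume "x \<in> carrier (aut_group br)"
  hence x: "lie_ring_aut br x" by (simp add: aut_group_def)
  have "inv_into UNIV x \<circ> x = id" using aut_bij[OF x] by (simp add: bij_is_inj)
  thus "\<exists>y\<in>carrier (aut_group br). y \<otimes>\<^bsub>aut_group br\<^esub> x = \<one>\<^bsub>aut_group br\<^esub>"
    using aut_inv[OF x] by (auto simp: aut_group_def)
qed (auto simp: aut_group_def aut_comp aut_id comp_assoc)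

lemma aut_group_inv: assumes "lie_ring_aut br f"
  shows "inv\<^bsub>aut_group br\<^esub> f = inv_into UNIV f"
proof -
  interpret group "aut_group br" by (rule aut_group_is_group)
  have "inv_into UNIV f \<circ> f = id" using aut_bij[OF assms] by (simp add: bij_is_inj)
  thus ?thesis using assms aut_inv[OF assms]
    by (intro inv_equality) (auto simp: aut_group_def)
qed

theorem proposition7p1:
  fixes br :: "'a::euclidean_space \<Rightarrow> 'a \<Rightarrow> 'a"
    and Z V :: "'a set"
    and G :: "('a \<Rightarrow> 'a) monoid"
    and H K :: "('a \<Rightarrow> 'a) set"
  assumes "lie_algebra br"
    and "two_step_nilpotent br"
    and "Z = derived_alg br \<or> Z = lie_center br"
    and "subspace V"
    and "V \<inter> Z = {0}"
    and "{v + z | v z. v \<in> V \<and> z \<in> Z} = UNIV"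
    and "G = aut_group br"
    and "H = {f \<in> carrier G. \<forall>x. f x - x \<in> Z}"
    and "K = {f \<in> carrier G. f ` V = V}"
  shows "H \<lhd> G \<and> subgroup K G \<and> H <#>\<^bsub>G\<^esub> K = carrier G \<and>
         (Z = derived_alg br \<longrightarrow> H \<inter> K = {\<one>\<^bsub>G\<^esub>})"
proof -
  have bil: "bilinear br" using assms(1) lie_algebra_def by blast
  have nil: "\<And>x y z. br (br x y) z = 0" using assms(2) two_step_nilpotent_def by blast
  have alt: "\<And>x. br x x = 0" using assms(1) lie_algebra_def by blast
  have anti: "br x y = - br y x" for x y
  proof -
    have "0 = br (x+y) (x+y)" using alt by simp
    also have "\<dots> = br x x + br x y + (br y x + br y y)"
      by (simp add: bilinear_ladd[OF bil] bilinear_radd[OF bil])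
    finally show ?thesis using alt by (simp add: eq_neg_iff_add_eq_0)
  qed
  have cen_sub: "subspace (lie_center br)"
    unfolding subspace_def lie_center_def
    by (auto simp: bilinear_lzero[OF bil] bilinear_ladd[OF bil] bilinear_lmul[OF bil])
  have der_cen: "derived_alg br \<subseteq> lie_center br"
    unfolding derived_alg_def using cen_sub by (intro span_minimal) (auto simp: lie_center_def nil)
  have Zsub: "subspace Z" using assms(3) cen_sub unfolding derived_alg_def by (auto simp: subspace_span)
  have Zcen: "br z x = 0 \<and> br x z = 0" if "z \<in> Z" for z x
  proof -
    have "z \<in> lie_center br" using that assms(3) der_cen by blast
    hence "br z x = 0" by (simp add: lie_center_def)
    thus ?thesis using anti[of x z] by simp
  qed
  have brZ: "br x y \<in> Z" for x y
    using assms(3) by (auto simp: derived_alg_def lie_center_def nil intro!: span_base)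
  have brc: "br (a + z1) (b + z2) = br a b" if "z1 \<in> Z" "z2 \<in> Z" for a b z1 z2
    using that by (simp add: bilinear_ladd[OF bil] bilinear_radd[OF bil] Zcen)
  have derived_pres: "f z \<in> derived_alg br" if f: "lie_ring_aut br f" and z: "z \<in> derived_alg br" for f z
  proof -
    from z[unfolded derived_alg_def] show "f z \<in> derived_alg br"
    proof (induction rule: span_induct_alt)
      case base thus ?case using aut_zero[OF f] by (simp add: derived_alg_def span_zero)
    next
      case (step c x y)
      then obtain a b where x: "x = br a b" by auto
      have "c *\<^sub>R x = br (c *\<^sub>R a) b" using x bilinear_lmul[OF bil] by simp
      hence "f (c *\<^sub>R x + y) = br (f (c *\<^sub>R a)) (f b) + f y" using aut_add[OF f] aut_br[OF f] by simp
      moreover have "br (f (c *\<^sub>R a)) (f b) \<in> span {br x y | x y. True}" by (rule span_base) auto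
      ultimately show ?case using step(2) unfolding derived_alg_def by (simp add: span_add)
    qed
  qed
  have center_pres: "f z \<in> lie_center br" if f: "lie_ring_aut br f" and z: "z \<in> lie_center br" for f z
  proof -
    have "br (f z) x = 0" for x
    proof -
      have "x = f (inv_into UNIV f x)" using aut_bij[OF f] by (simp add: bij_is_surj surj_f_inv_f)
      hence "br (f z) x = f (br z (inv_into UNIV f x))" using aut_br[OF f] by metis
      thus ?thesis using z aut_zero[OF f] by (simp add: lie_center_def)
    qed
    thus "f z \<in> lie_center br" by (simp add: lie_center_def)
  qed
  have Zpres: "f z \<in> Z" if "lie_ring_aut br f" "z \<in> Z" for f z
    using assms(3) derived_pres center_pres that by blast
  have Zpres_inv: "z \<in> Z" if f: "lie_ring_aut br f" and "f z \<in> Z" for f z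
  proof -
    have "z = inv_into UNIV f (f z)" using aut_bij[OF f] by (simp add: bij_is_inj)
    thus ?thesis using Zpres[OF aut_inv[OF f] that(2)] by simp
  qed
  have VZ0: "a = 0" if "a \<in> V" "a \<in> Z" for a using assms(5) that by blast
  define p where "p x = (SOME v. v \<in> V \<and> x - v \<in> Z)" for x
  have pex: "\<exists>v. v \<in> V \<and> x - v \<in> Z" for x
  proof -
    have "x \<in> {v + z | v z. v \<in> V \<and> z \<in> Z}" using assms(6) by simp
    then obtain v z where "x = v + z" "v \<in> V" "z \<in> Z" by blast
    thus ?thesis by (intro exI[of _ v]) simp
  qed
  have pVZ: "p x \<in> V \<and> x - p x \<in> Z" for x
    unfolding p_def using someI_ex[OF pex[of x]] .
  have pV: "p x \<in> V" for x using pVZ by blast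
  have pZ: "x - p x \<in> Z" for x using pVZ by blast
  have puniq: "p x = v" if "v \<in> V" "x - v \<in> Z" for x v
  proof -
    have "p x - v \<in> V" using subspace_diff[OF assms(4) pV that(1)] .
    moreover have "p x - v = (x - v) - (x - p x)" by simp
    hence "p x - v \<in> Z" using subspace_diff[OF Zsub that(2) pZ[of x]] by simp
    ultimately show ?thesis using VZ0 by fastforce
  qed
  have padd: "p (x + y) = p x + p y" for x y
  proof (rule puniq)
    show "p x + p y \<in> V" using subspace_add[OF assms(4) pV pV] .
    have "x + y - (p x + p y) = (x - p x) + (y - p y)" by simp
    thus "x + y - (p x + p y) \<in> Z" using subspace_add[OF Zsub pZ[of x] pZ[of y]] by metis
  qed
  have pVid: "p v = v" if "v \<in> V" for v using puniq[OF that] subspace_0[OF Zsub] by simp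
  have pZ0: "p z = 0" if "z \<in> Z" for z using puniq[OF subspace_0[OF assms(4)]] that by simp
  interpret G: group G using assms(7) aut_group_is_group by simp
  have carr: "carrier G = {f. lie_ring_aut br f}" by (simp add: assms(7) aut_group_def)
  have mult: "\<And>f g. f \<otimes>\<^bsub>G\<^esub> g = f \<circ> g" by (simp add: assms(7) aut_group_def)
  have one: "\<one>\<^bsub>G\<^esub> = id" by (simp add: assms(7) aut_group_def)
  have ginv: "inv\<^bsub>G\<^esub> f = inv_into UNIV f" if "f \<in> carrier G" for f
    using aut_group_inv assms(7) carr that by auto
  have subH: "subgroup H G"
  proof (rule G.subgroupI)
    show "H \<subseteq> carrier G" using assms(8) by auto
    have "id \<in> H" using assms(8) carr aut_id subspace_0[OF Zsub] by auto
    thus "H \<noteq> {}" by blast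
  next
    fix a assume a: "a \<in> H"
    hence aut: "lie_ring_aut br a" and ax: "\<forall>x. a x - x \<in> Z" using assms(8) carr by auto
    have "inv_into UNIV a x - x \<in> Z" for x
    proof -
      have "inv_into UNIV a x - x = - (a (inv_into UNIV a x) - inv_into UNIV a x)"
        using aut_bij[OF aut] by (simp add: bij_is_surj surj_f_inv_f)
      thus ?thesis using ax subspace_neg[OF Zsub] by metis
    qed
    thus "inv\<^bsub>G\<^esub> a \<in> H" using ginv[of a] aut_inv[OF aut] assms(8) carr aut by auto
  next
    fix a b assume a: "a \<in> H" and b: "b \<in> H"
    have "(a \<circ> b) x - x \<in> Z" for x
    proof -
      have "(a \<circ> b) x - x = (a (b x) - b x) + (b x - x)" by simp
      moreover have "a (b x) - b x \<in> Z" "b x - x \<in> Z" using a b assms(8) by auto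
      ultimately show ?thesis using subspace_add[OF Zsub] by metis
    qed
    thus "a \<otimes>\<^bsub>G\<^esub> b \<in> H" using a b assms(8) carr mult aut_comp by auto
  qed
  have normH: "H \<lhd> G"
    unfolding G.normal_inv_iff
  proof (intro conjI ballI subH)
    fix g h assume g: "g \<in> carrier G" and h: "h \<in> H"
    have ga: "lie_ring_aut br g" using g carr by simp
    have ha: "lie_ring_aut br h" using h carr assms(8) by simp
    let ?gi = "inv_into UNIV g"
    have "(g \<circ> h \<circ> ?gi) x - x \<in> Z" for x
    proof -
      have "x = g (?gi x)" using aut_bij[OF ga] by (simp add: bij_is_surj surj_f_inv_f)
      hence "(g \<circ> h \<circ> ?gi) x - x = g (h (?gi x) - ?gi x)" using aut_diff[OF ga] by (metis comp_apply)
      moreover have "h (?gi x) - ?gi x \<in> Z" using h assms(8) by auto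
      ultimately show ?thesis using Zpres[OF ga] by simp
    qed
    moreover have "g \<circ> h \<circ> ?gi \<in> carrier G" using aut_comp[OF aut_comp[OF ga ha] aut_inv[OF ga]] carr by simp
    ultimately show "g \<otimes>\<^bsub>G\<^esub> h \<otimes>\<^bsub>G\<^esub> inv\<^bsub>G\<^esub> g \<in> H" using ginv[OF g] mult assms(8) by simp
  qed
  have subK: "subgroup K G"
  proof (rule G.subgroupI)
    show "K \<subseteq> carrier G" using assms(9) by auto
    have "id \<in> K" using assms(9) carr aut_id by auto
    thus "K \<noteq> {}" by blast
  next
    fix a assume a: "a \<in> K"
    hence aut: "lie_ring_aut br a" and aV: "a ` V = V" using assms(9) carr by auto
    have "inv_into UNIV a ` V = V"
      using aV aut_bij[OF aut] by (metis bij_is_inj image_inv_f_f)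
    thus "inv\<^bsub>G\<^esub> a \<in> K" using ginv[of a] aut_inv[OF aut] assms(9) carr aut by auto
  next
    fix a b assume a: "a \<in> K" and b: "b \<in> K"
    hence "lie_ring_aut br a" "lie_ring_aut br b" "a ` V = V" "b ` V = V" using assms(9) carr by auto
    moreover have "(a \<circ> b) ` V = a ` (b ` V)" by (simp add: image_comp)
    ultimately show "a \<otimes>\<^bsub>G\<^esub> b \<in> K" using assms(9) carr mult aut_comp by simp
  qed
  have HKsub: "H <#>\<^bsub>G\<^esub> K \<subseteq> carrier G"
    using subH subK G.m_closed by (auto simp: set_mult_def dest: subgroup.mem_carrier)
  have "carrier G \<subseteq> H <#>\<^bsub>G\<^esub> K"
  proof
    fix f assume "f \<in> carrier G"
    hence fa: "lie_ring_aut br f" using carr by simp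
    have finv: "f (inv_into UNIV f x) = x" for x using aut_bij[OF fa] by (simp add: bij_is_surj surj_f_inv_f)
    define k where "k x = p (f (p x)) + f (x - p x)" for x
    have kadd: "k (x + y) = k x + k y" for x y
    proof -
      have e: "(x + y) - (p x + p y) = (x - p x) + (y - p y)" by simp
      show ?thesis unfolding k_def padd e aut_add[OF fa] by simp
    qed
    have kad: "Modules.additive k" using kadd by (simp add: Modules.additive_def)
    have kf: "k x - f x \<in> Z" for x
    proof -
      have "f x = f (p x) + f (x - p x)" using aut_add[OF fa] by (metis add.commute diff_add_cancel)
      hence "k x - f x = - (f (p x) - p (f (p x)))" unfolding k_def by simp
      thus ?thesis using pZ subspace_neg[OF Zsub] by metis
    qed
    have kbr: "k (br x y) = br (k x) (k y)" for x y
    proof -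
      have "k (br x y) = f (br x y)" unfolding k_def using pZ0[OF brZ] aut_zero[OF fa] pZ0[OF subspace_0[OF Zsub]] by simp
      also have "\<dots> = br (f x) (f y)" using aut_br[OF fa] .
      also have "\<dots> = br (f x + (k x - f x)) (f y + (k y - f y))" using brc[OF kf[of x] kf[of y], of "f x" "f y"] by simp
      finally show ?thesis by simp
    qed
    have kV: "k v = p (f v)" if "v \<in> V" for v
      unfolding k_def using pVid[OF that] aut_zero[OF fa] by simp
    have kZ: "k z = f z" if "z \<in> Z" for z
      unfolding k_def using pZ0[OF that] aut_zero[OF fa] pZ0[OF subspace_0[OF Zsub]] by simp
    have kVsurj: "\<exists>u\<in>V. k u = v" if "v \<in> V" for v
    proof -
      define w where "w = inv_into UNIV f v"
      have "f (p w) = v - f (w - p w)" using aut_diff[OF fa, of w "w - p w"] finv[of v] w_def by simp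
      hence "f (p w) - v = - f (w - p w)" by simp
      hence "f (p w) - v \<in> Z" using Zpres[OF fa pZ] subspace_neg[OF Zsub] by metis
      hence "p (f (p w)) = v" using puniq[OF that] by simp
      thus ?thesis using kV[OF pV] pV by metis
    qed
    have kker: "x = 0" if "k x = 0" for x
    proof -
      have a: "p (f (p x)) \<in> V" using pV .
      have b: "f (x - p x) \<in> Z" using Zpres[OF fa pZ] .
      have "p (f (p x)) = - f (x - p x)" using that unfolding k_def by (simp add: eq_neg_iff_add_eq_0)
      hence "p (f (p x)) \<in> Z" using b subspace_neg[OF Zsub] by metis
      hence a0: "p (f (p x)) = 0" using a VZ0 by blast
      hence b0: "f (x - p x) = 0" using that unfolding k_def by simp
      have "x - p x = 0" using b0 aut_zero[OF fa] aut_bij[OF fa] by (metis bij_is_inj injD)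
      moreover have "f (p x) \<in> Z" using pZ[of "f (p x)"] a0 by simp
      hence "p x \<in> Z" using Zpres_inv[OF fa] by blast
      hence "p x = 0" using VZ0 pV by blast
      ultimately show ?thesis by simp
    qed
    have kinj: "inj k"
    proof (rule injI)
      fix x y assume "k x = k y"
      hence "k (x - y) = 0" using Modules.additive.diff[OF kad] by simp
      hence "x - y = 0" using kker by blast
      thus "x = y" by simp
    qed
    have ksurj: "surj k"
    proof -
      have "y \<in> range k" for y
      proof -
        obtain u where u: "u \<in> V" "k u = p y" using kVsurj[OF pV] by blast
        define w where "w = inv_into UNIV f (y - p y)"
        have wZ: "w \<in> Z" using Zpres_inv[OF fa] finv pZ w_def by metis
        have "k w = y - p y" using kZ[OF wZ] finv w_def by simp
        hence "k (u + w) = y" using kadd u by simp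
        thus ?thesis by (metis rangeI)
      qed
      thus ?thesis by blast
    qed
    have kaut: "lie_ring_aut br k" unfolding lie_ring_aut_def bij_def
      using kinj ksurj kadd kbr by blast
    have kVV: "k ` V = V"
    proof
      show "k ` V \<subseteq> V" using kV pV by auto
      show "V \<subseteq> k ` V" using kVsurj by (metis image_eqI subsetI)
    qed
    have kK: "k \<in> K" using kaut kVV assms(9) carr by simp
    define h where "h = f \<circ> inv_into UNIV k"
    have haut: "lie_ring_aut br h" unfolding h_def using aut_comp[OF fa aut_inv[OF kaut]] .
    have hH: "h x - x \<in> Z" for x
    proof -
      define y where "y = inv_into UNIV k x"
      have "x = k y" using ksurj y_def by (simp add: surj_f_inv_f)
      hence "h x - x = - (k y - f y)" unfolding h_def y_def by simp
      thus ?thesis using kf subspace_neg[OF Zsub] by metis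
    qed
    have "h \<circ> k = f" unfolding h_def using kinj by (auto simp: fun_eq_iff)
    hence "f = h \<otimes>\<^bsub>G\<^esub> k" using mult by simp
    moreover have "h \<in> H" using haut hH assms(8) carr by simp
    ultimately show "f \<in> H <#>\<^bsub>G\<^esub> K" unfolding set_mult_def using kK by auto
  qed
  hence HK: "H <#>\<^bsub>G\<^esub> K = carrier G" using HKsub by blast
  have "Z = derived_alg br \<longrightarrow> H \<inter> K = {\<one>\<^bsub>G\<^esub>}"
  proof
    assume Zd: "Z = derived_alg br"
    show "H \<inter> K = {\<one>\<^bsub>G\<^esub>}"
    proof
      show "{\<one>\<^bsub>G\<^esub>} \<subseteq> H \<inter> K" using subH subK subgroup.one_closed by blast
      show "H \<inter> K \<subseteq> {\<one>\<^bsub>G\<^esub>}"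
      proof
        fix f assume f: "f \<in> H \<inter> K"
        hence fa: "lie_ring_aut br f" and fZ: "\<forall>x. f x - x \<in> Z" and fV: "f ` V = V"
          using assms(8,9) carr by auto
        have fixV: "f v = v" if "v \<in> V" for v
        proof -
          have "f v \<in> V" using fV that by blast
          hence "f v - v \<in> V" using subspace_diff[OF assms(4) _ that] by blast
          thus ?thesis using fZ VZ0 by fastforce
        qed
        have fixZ: "f z = z" if "z \<in> Z" for z
        proof -
          from that[unfolded Zd derived_alg_def] show ?thesis
          proof (induction rule: span_induct_alt)
            case base thus ?case using aut_zero[OF fa] by simp
          next
            case (step c x y)
            then obtain a b where x: "x = br a b" by auto
            have cx: "c *\<^sub>R x = br (c *\<^sub>R a) b" using x bilinear_lmul[OF bil] by simp
            have "f (br (c *\<^sub>R a) b) = br (f (c *\<^sub>R a)) (f b)" using aut_br[OF fa] .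
            also have "\<dots> = br (c *\<^sub>R a + (f (c *\<^sub>R a) - c *\<^sub>R a)) (b + (f b - b))" by simp
            also have "\<dots> = br (c *\<^sub>R a) b" using brc fZ by blast
            finally show ?case using cx step(2) aut_add[OF fa] by simp
          qed
        qed
        have "f x = x" for x
        proof -
          have "f x = f (p x) + f (x - p x)" using aut_add[OF fa] by (metis add.commute diff_add_cancel)
          thus ?thesis using fixV[OF pV] fixZ[OF pZ] by simp
        qed
        hence "f = id" by auto
        thus "f \<in> {\<one>\<^bsub>G\<^esub>}" using one by simp
      qed
    qed
  qed
  thus ?thesis using normH subK HK by blast
qed

end
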